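(* Let $0<\alpha\le\delta<\infty$ and $0<\gamma<\tfrac13$, and define $\mathcal R^a_1(a)_k=\frac{1}{k+1}\sum_{n=0}^k a_na_{k-n}$ for $k\in\mathbb N_0$. Then $\mathcal R^a_1$, acting on $X_{\alpha,\delta}$, is a strict contraction with respect to $d(a,b)=\sum_{k\ge0}(\gamma/\delta)^k|a_k-b_k|$: there is $C<1$ such that $d(\mathcal R^a_1(a),\mathcal R^a_1(b))\le C\,d(a,b)$ for all $a,b\in X_{\alpha,\delta}$.
   Context: $X_{\alpha,\delta}$ is the set of real sequences $a=(a_k)_{k\ge0}$ with $a_0=1$, $a_1=\alpha$, $0\le a_k\le\delta^k$ for $k\ge2$. *)

theory Defs
  imports Complex_Main
begin

definition Xset :: "real \<Rightarrow> real \<Rightarrow> (nat \<Rightarrow> real) set" where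
  "Xset \<alpha> \<delta> = {a. a 0 = 1 \<and> a 1 = \<alpha> \<and> (\<forall>k\<ge>2. 0 \<le> a k \<and> a k \<le> \<delta> ^ k)}"

definition R1 :: "(nat \<Rightarrow> real) \<Rightarrow> nat \<Rightarrow> real" where
  "R1 a k = (1 / real (k + 1)) * (\<Sum>n = 0..k. a n * a (k - n))"

definition wdist :: "real \<Rightarrow> real \<Rightarrow> (nat \<Rightarrow> real) \<Rightarrow> (nat \<Rightarrow> real) \<Rightarrow> real" where
  "wdist \<gamma> \<delta> a b = (\<Sum>k. (\<gamma> / \<delta>) ^ k * \<bar>a k - b k\<bar>)"

end

theory Submission
  imports Defs
begin
lemma swap_tri:
  fixes f :: "nat \<Rightarrow> nat \<Rightarrow> real"
  shows "(\<Sum>k<N. \<Sum>m=0..k. f k m) = (\<Sum>m<N. \<Sum>k=m..<N. f k m)"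
proof (induction N)
  case 0 then show ?case by simp
next
  case (Suc N)
  have "(\<Sum>m<Suc N. \<Sum>k=m..<Suc N. f k m) = (\<Sum>m<N. \<Sum>k=m..<Suc N. f k m) + f N N"
    by simp
  also have "(\<Sum>m<N. \<Sum>k=m..<Suc N. f k m) = (\<Sum>m<N. (\<Sum>k=m..<N. f k m) + f N m)"
    by (intro sum.cong) auto
  also have "\<dots> = (\<Sum>m<N. \<Sum>k=m..<N. f k m) + (\<Sum>m<N. f N m)"
    by (simp add: sum.distrib)
  finally show ?case using Suc by (simp add: atLeast0AtMost lessThan_Suc_atMost[symmetric])
qed

lemma geo_bound:
  fixes \<gamma> :: real assumes "0 \<le> \<gamma>" "\<gamma> < 1"
  shows "(\<Sum>k=m..<N. \<gamma>^(k-m)) \<le> 1/(1-\<gamma>)"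
proof (cases "m \<le> N")
  case True
  have "(\<Sum>k=m..<N. \<gamma>^(k-m)) = (\<Sum>j<N-m. \<gamma>^j)"
  proof -
    have "(\<Sum>k=m..<N. \<gamma>^(k-m)) = (\<Sum>j=0..<N-m. \<gamma>^(j+m-m))"
      using sum.shift_bounds_nat_ivl[of "\<lambda>k. \<gamma>^(k-m)" 0 m "N-m"] True by simp
    then show ?thesis by (simp add: atLeast0LessThan)
  qed
  also have "\<dots> = (1 - \<gamma>^(N-m))/(1-\<gamma>)" using assms by (simp add: sum_gp_strict)
  also have "\<dots> \<le> 1/(1-\<gamma>)" using assms by (intro divide_right_mono) auto
  finally show ?thesis .
next
  case False then show ?thesis using assms by simp
qed

lemma L2:
  fixes \<gamma> :: real and E :: "nat \<Rightarrow> real"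
  assumes "0 \<le> \<gamma>" "\<gamma> < 1" "\<And>m. 0 \<le> E m" "E 0 = 0" "E 1 = 0"
  shows "(\<Sum>k<N. 2/(real k+1) * (\<Sum>m=0..k. \<gamma>^(k-m) * E m)) \<le> 2/(3*(1-\<gamma>)) * (\<Sum>k<N. E k)"
proof -
  have S0: "0 \<le> (\<Sum>m=0..k. \<gamma>^(k-m) * E m)" for k using assms by (intro sum_nonneg) auto
  have "2/(real k+1) * (\<Sum>m=0..k. \<gamma>^(k-m) * E m) \<le> 2/3 * (\<Sum>m=0..k. \<gamma>^(k-m) * E m)" for k
  proof (cases "k \<ge> 2")
    case True
    then show ?thesis using S0[of k] by (intro mult_right_mono) (auto simp: field_simps)
  next
    case False
    then have "k = 0 \<or> k = 1" by auto
    then show ?thesis using assms by auto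
  qed
  then have "(\<Sum>k<N. 2/(real k+1) * (\<Sum>m=0..k. \<gamma>^(k-m) * E m)) \<le> (\<Sum>k<N. 2/3 * (\<Sum>m=0..k. \<gamma>^(k-m) * E m))"
    by (intro sum_mono) auto
  also have "\<dots> = 2/3 * (\<Sum>m<N. \<Sum>k=m..<N. \<gamma>^(k-m) * E m)"
    using swap_tri[of "\<lambda>k m. \<gamma>^(k-m) * E m" N] by (simp only: sum_distrib_left[symmetric])
  also have "\<dots> = 2/3 * (\<Sum>m<N. E m * (\<Sum>k=m..<N. \<gamma>^(k-m)))"
    by (simp add: sum_distrib_left mult.commute)
  also have "\<dots> \<le> 2/3 * (\<Sum>m<N. E m * (1/(1-\<gamma>)))"
    using assms geo_bound by (intro mult_left_mono sum_mono mult_left_mono) auto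
  also have "\<dots> = 2/(3*(1-\<gamma>)) * (\<Sum>k<N. E k)"
    using assms(2) by (simp add: sum_divide_distrib[symmetric] field_simps)
  finally show ?thesis .
qed


lemma Xbnd:
  assumes "a \<in> Xset \<alpha> \<delta>" "0 < \<alpha>" "\<alpha> \<le> \<delta>"
  shows "\<bar>a k\<bar> \<le> \<delta>^k" "a 0 = 1" "a 1 = \<alpha>"
proof -
  show "a 0 = 1" "a 1 = \<alpha>" using assms by (auto simp: Xset_def)
  show "\<bar>a k\<bar> \<le> \<delta>^k"
  proof (cases "k \<ge> 2")
    case True then show ?thesis using assms by (auto simp: Xset_def)
  next
    case False then have "k = 0 \<or> k = 1" by auto
    then show ?thesis using assms by (auto simp: Xset_def)
  qed
qed

lemma L1:
  assumes a: "a \<in> Xset \<alpha> \<delta>" and b: "b \<in> Xset \<alpha> \<delta>" and "0 < \<alpha>" "\<alpha> \<le> \<delta>" "0 < \<gamma>"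
  shows "(\<gamma>/\<delta>)^k * \<bar>R1 a k - R1 b k\<bar>
     \<le> 2/(real k+1) * (\<Sum>m=0..k. \<gamma>^(k-m) * ((\<gamma>/\<delta>)^m * \<bar>a m - b m\<bar>))"
proof -
  have dp: "\<delta> > 0" using assms by simp
  define r where "r = \<gamma>/\<delta>"
  have r0: "r \<ge> 0" using assms dp by (simp add: r_def)
  have "R1 a k - R1 b k = 1/(real k+1) * (\<Sum>n=0..k. a n * (a (k-n) - b (k-n)) + (a n - b n) * b (k-n))"
  proof -
    have "(\<Sum>n=0..k. a n * (a (k-n) - b (k-n)) + (a n - b n) * b (k-n))
        = (\<Sum>n=0..k. a n * a (k-n) - b n * b (k-n))"
      by (intro sum.cong) (auto simp: algebra_simps)
    also have "\<dots> = (\<Sum>n=0..k. a n * a (k-n)) - (\<Sum>n=0..k. b n * b (k-n))"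
      by (rule sum_subtractf)
    finally show ?thesis by (simp add: R1_def right_diff_distrib add.commute)
  qed
  then have "\<bar>R1 a k - R1 b k\<bar> = 1/(real k+1) * \<bar>\<Sum>n=0..k. a n * (a (k-n) - b (k-n)) + (a n - b n) * b (k-n)\<bar>"
    by (simp add: abs_mult)
  also have "\<bar>\<Sum>n=0..k. a n * (a (k-n) - b (k-n)) + (a n - b n) * b (k-n)\<bar>
      \<le> (\<Sum>n=0..k. \<delta>^n * \<bar>a (k-n) - b (k-n)\<bar> + \<bar>a n - b n\<bar> * \<delta>^(k-n))"
  proof -
    have "\<bar>\<Sum>n=0..k. a n * (a (k-n) - b (k-n)) + (a n - b n) * b (k-n)\<bar>
       \<le> (\<Sum>n=0..k. \<bar>a n * (a (k-n) - b (k-n)) + (a n - b n) * b (k-n)\<bar>)" by (rule sum_abs)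
    also have "\<dots> \<le> (\<Sum>n=0..k. \<delta>^n * \<bar>a (k-n) - b (k-n)\<bar> + \<bar>a n - b n\<bar> * \<delta>^(k-n))"
    proof (intro sum_mono)
      fix n
      have "\<bar>a n * (a (k-n) - b (k-n)) + (a n - b n) * b (k-n)\<bar>
         \<le> \<bar>a n\<bar> * \<bar>a (k-n) - b (k-n)\<bar> + \<bar>a n - b n\<bar> * \<bar>b (k-n)\<bar>"
        using abs_triangle_ineq[of "a n * (a (k-n) - b (k-n))" "(a n - b n) * b (k-n)"]
        by (simp only: abs_mult)
      also have "\<dots> \<le> \<delta>^n * \<bar>a (k-n) - b (k-n)\<bar> + \<bar>a n - b n\<bar> * \<delta>^(k-n)"
      proof -
        have h1: "\<bar>a n\<bar> \<le> \<delta>^n" using Xbnd(1)[OF a assms(3,4)] .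
        have h2: "\<bar>b (k-n)\<bar> \<le> \<delta>^(k-n)" using Xbnd(1)[OF b assms(3,4)] .
        have "\<bar>a n\<bar> * \<bar>a (k-n) - b (k-n)\<bar> \<le> \<delta>^n * \<bar>a (k-n) - b (k-n)\<bar>"
          by (rule mult_right_mono[OF h1 abs_ge_zero])
        moreover have "\<bar>a n - b n\<bar> * \<bar>b (k-n)\<bar> \<le> \<bar>a n - b n\<bar> * \<delta>^(k-n)"
          by (rule mult_left_mono[OF h2 abs_ge_zero])
        ultimately show ?thesis by (rule add_mono)
      qed
      finally show "\<bar>a n * (a (k-n) - b (k-n)) + (a n - b n) * b (k-n)\<bar>
         \<le> \<delta>^n * \<bar>a (k-n) - b (k-n)\<bar> + \<bar>a n - b n\<bar> * \<delta>^(k-n)" .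
    qed
    finally show ?thesis .
  qed
  also have "(\<Sum>n=0..k. \<delta>^n * \<bar>a (k-n) - b (k-n)\<bar> + \<bar>a n - b n\<bar> * \<delta>^(k-n))
      = 2 * (\<Sum>m=0..k. \<delta>^(k-m) * \<bar>a m - b m\<bar>)"
  proof -
    have "(\<Sum>n=0..k. \<delta>^n * \<bar>a (k-n) - b (k-n)\<bar>) = (\<Sum>m=0..k. \<delta>^(k-m) * \<bar>a m - b m\<bar>)"
      using sum.atLeastAtMost_rev[of "\<lambda>n. \<delta>^n * \<bar>a (k-n) - b (k-n)\<bar>" 0 k]
      by (rule trans) (rule sum.cong, simp_all)
    then show ?thesis by (simp add: sum.distrib mult.commute)
  qed
  finally have A: "\<bar>R1 a k - R1 b k\<bar> \<le> 1/(real k+1) * (2 * (\<Sum>m=0..k. \<delta>^(k-m) * \<bar>a m - b m\<bar>))"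
    by (simp add: divide_right_mono)
  have "r^k * \<bar>R1 a k - R1 b k\<bar> \<le> r^k * (1/(real k+1) * (2 * (\<Sum>m=0..k. \<delta>^(k-m) * \<bar>a m - b m\<bar>)))"
    using A r0 by (intro mult_left_mono) auto
  also have "\<dots> = 2/(real k+1) * (\<Sum>m=0..k. r^k * \<delta>^(k-m) * \<bar>a m - b m\<bar>)"
    by (simp add: sum_distrib_left mult_ac)
  also have "(\<Sum>m=0..k. r^k * \<delta>^(k-m) * \<bar>a m - b m\<bar>) = (\<Sum>m=0..k. \<gamma>^(k-m) * (r^m * \<bar>a m - b m\<bar>))"
  proof (intro sum.cong refl)
    fix m assume "m \<in> {0..k}"
    then have "r^k = r^m * r^(k-m)" by (simp add: power_add[symmetric])
    moreover have "r^(k-m) * \<delta>^(k-m) = \<gamma>^(k-m)" using dp by (simp add: r_def power_mult_distrib[symmetric])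
    ultimately show "r^k * \<delta>^(k-m) * \<bar>a m - b m\<bar> = \<gamma>^(k-m) * (r^m * \<bar>a m - b m\<bar>)"
      by (metis mult.commute mult.left_commute)
  qed
  finally show ?thesis by (simp add: r_def)
qed

theorem proposition12:
  fixes \<alpha> \<delta> \<gamma> :: real
  assumes "0 < \<alpha>" and "\<alpha> \<le> \<delta>" and "0 < \<gamma>" and "\<gamma> < 1 / 3"
  shows "\<exists>C. 0 \<le> C \<and> C < 1 \<and>
           (\<forall>a\<in>Xset \<alpha> \<delta>. \<forall>b\<in>Xset \<alpha> \<delta>.
              wdist \<gamma> \<delta> (R1 a) (R1 b) \<le> C * wdist \<gamma> \<delta> a b)"
proof (intro exI conjI ballI)
  define C where "C = 2/(3*(1-\<gamma>))"
  show "0 \<le> C" using assms by (simp add: C_def)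
  show "C < 1" using assms by (simp add: C_def field_simps)
  fix a b assume a: "a \<in> Xset \<alpha> \<delta>" and b: "b \<in> Xset \<alpha> \<delta>"
  have dp: "\<delta> > 0" using assms by simp
  define E where "E m = (\<gamma>/\<delta>)^m * \<bar>a m - b m\<bar>" for m
  have E0: "0 \<le> E m" for m using dp assms by (simp add: E_def)
  have Eb: "E m \<le> 2 * \<gamma>^m" for m
  proof -
    have "\<bar>a m - b m\<bar> \<le> 2 * \<delta>^m" using Xbnd[OF a assms(1,2)] Xbnd[OF b assms(1,2)]
      by (smt (verit))
    then have "E m \<le> (\<gamma>/\<delta>)^m * (2 * \<delta>^m)" unfolding E_def using dp assms
      by (intro mult_left_mono) auto
    also have "\<dots> = 2 * \<gamma>^m" using dp by (simp add: power_divide)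
    finally show ?thesis .
  qed
  have sumE: "summable E"
    by (rule summable_comparison_test[of _ "\<lambda>m. 2 * \<gamma>^m"]) (use E0 Eb assms in \<open>auto intro!: summable_mult summable_geometric\<close>)
  have Ea: "E 0 = 0" "E 1 = 0" using Xbnd[OF a assms(1,2)] Xbnd[OF b assms(1,2)] by (auto simp: E_def)
  define F where "F k = (\<gamma>/\<delta>)^k * \<bar>R1 a k - R1 b k\<bar>" for k
  have F0: "0 \<le> F k" for k using dp assms by (simp add: F_def)
  have FL: "F k \<le> 2/(real k+1) * (\<Sum>m=0..k. \<gamma>^(k-m) * E m)" for k
    unfolding F_def E_def by (rule L1[OF a b assms(1,2,3)])
  have Fb: "F k \<le> 4 * \<gamma>^k" for k
  proof -
    have "F k \<le> 2/(real k+1) * (\<Sum>m=0..k. \<gamma>^(k-m) * E m)" by (rule FL)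
    also have "\<dots> \<le> 2/(real k+1) * (\<Sum>m=0..k. 2 * \<gamma>^k)"
    proof (intro mult_left_mono sum_mono)
      fix m assume "m \<in> {0..k}"
      then have "\<gamma>^(k-m) * E m \<le> \<gamma>^(k-m) * (2*\<gamma>^m)" using Eb assms by (intro mult_left_mono) auto
      also have "\<dots> = 2 * \<gamma>^k" using \<open>m \<in> {0..k}\<close> by (simp add: power_add[symmetric])
      finally show "\<gamma>^(k-m) * E m \<le> 2 * \<gamma>^k" .
    qed auto
    also have "\<dots> = 4 * \<gamma>^k" by (simp add: field_simps)
    finally show ?thesis .
  qed
  have sumF: "summable F"
    by (rule summable_comparison_test[of _ "\<lambda>m. 4 * \<gamma>^m"]) (use F0 Fb assms in \<open>auto intro!: summable_mult summable_geometric\<close>)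
  have "suminf F \<le> C * suminf E"
  proof (rule suminf_le_const[OF sumF])
    fix N
    have "sum F {..<N} \<le> (\<Sum>k<N. 2/(real k+1) * (\<Sum>m=0..k. \<gamma>^(k-m) * E m))"
      by (intro sum_mono FL)
    also have "\<dots> \<le> C * (\<Sum>k<N. E k)" unfolding C_def
      by (rule L2) (use assms E0 Ea in auto)
    also have "\<dots> \<le> C * suminf E"
      using assms E0 sumE by (intro mult_left_mono sum_le_suminf) (auto simp: C_def)
    finally show "sum F {..<N} \<le> C * suminf E" .
  qed
  then show "wdist \<gamma> \<delta> (R1 a) (R1 b) \<le> C * wdist \<gamma> \<delta> a b"
    unfolding wdist_def F_def[abs_def] E_def[abs_def] .
qed

end
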